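(* For every graph $G$ with at least one edge, $wr(G)\le sr(G)\le \lceil (\Delta(G)+1)/2\rceil$, where $\Delta(G)$ is the maximum degree of $G$.
   Context: All graphs are finite, simple and undirected. For a set $E'$ of edges of a graph, the subgraph induced by $E'$ is the graph whose edge set is $E'$ and whose vertex set is the set of endpoints of edges in $E'$. A graph is weakly semiregular if there are two numbers $a,b$ (not necessarily distinct) such that the degree of every vertex is $a$ or $b$; $wr(G)$ is the minimum number of subsets into which $E(G)$ can be partitioned so that the subgraph induced by each subset is weakly semiregular. A graph is semiregular if there is an integer $d$ such that every vertex has degree $d$ or $d+1$; $sr(G)$ is the minimum number of subsets into which $E(G)$ can be partitioned so that the subgraph induced by each subset is semiregular. *)

theory Defs
  imports Complex_Main
begin

definition simple_graph :: "'a set \<Rightarrow> 'a set set \<Rightarrow> bool" where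
  "simple_graph V E \<longleftrightarrow> finite V \<and> (\<forall>e\<in>E. \<exists>u v. u \<noteq> v \<and> u \<in> V \<and> v \<in> V \<and> e = {u, v})"

definition deg :: "'a set set \<Rightarrow> 'a \<Rightarrow> nat" where
  "deg E v = card {e \<in> E. v \<in> e}"

definition max_deg :: "'a set \<Rightarrow> 'a set set \<Rightarrow> nat" where
  "max_deg V E = Max (deg E ` V)"

text \<open>The subgraph induced by an edge set F has vertex set \<Union>F and edge set F.\<close>
definition weakly_semiregular :: "'a set set \<Rightarrow> bool" where
  "weakly_semiregular F \<longleftrightarrow> (\<exists>a b. \<forall>v\<in>\<Union>F. deg F v = a \<or> deg F v = b)"

definition semiregular :: "'a set set \<Rightarrow> bool" where
  "semiregular F \<longleftrightarrow> (\<exists>d. \<forall>v\<in>\<Union>F. deg F v = d \<or> deg F v = Suc d)"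

definition edge_partition :: "'a set set \<Rightarrow> nat \<Rightarrow> (nat \<Rightarrow> 'a set set) \<Rightarrow> bool" where
  "edge_partition E k P \<longleftrightarrow>
     (\<Union>i<k. P i) = E \<and> (\<forall>i<k. P i \<noteq> {}) \<and>
     (\<forall>i<k. \<forall>j<k. i \<noteq> j \<longrightarrow> P i \<inter> P j = {})"

definition wr :: "'a set set \<Rightarrow> nat" where
  "wr E = (LEAST k. \<exists>P. edge_partition E k P \<and> (\<forall>i<k. weakly_semiregular (P i)))"

definition sr :: "'a set set \<Rightarrow> nat" where
  "sr E = (LEAST k. \<exists>P. edge_partition E k P \<and> (\<forall>i<k. semiregular (P i)))"

end

theory Submission
  imports Defs
begin

definition outd :: "('n \<times> 'n) set \<Rightarrow> 'n \<Rightarrow> nat" where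
  "outd A x = card {e\<in>A. fst e = x}"
definition ind :: "('n \<times> 'n) set \<Rightarrow> 'n \<Rightarrow> nat" where
  "ind A x = card {e\<in>A. snd e = x}"
definition dv :: "('n \<times> 'n) set \<Rightarrow> 'n \<Rightarrow> int" where
  "dv A x = int (outd A x) - int (ind A x)"

lemma dv_insert:
  assumes "finite P" "e \<notin> P"
  shows "dv (insert e P) x = dv P x + (if fst e = x then 1 else 0) - (if snd e = x then 1 else 0)"
proof -
  have s1: "{q\<in>insert e P. fst q = x} = (if fst e = x then insert e {q\<in>P. fst q = x} else {q\<in>P. fst q = x})"
    by auto
  have s2: "{q\<in>insert e P. snd q = x} = (if snd e = x then insert e {q\<in>P. snd q = x} else {q\<in>P. snd q = x})"
    by auto
  have o: "outd (insert e P) x = outd P x + (if fst e = x then 1 else 0)"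
    unfolding outd_def s1 using assms by auto
  have i: "ind (insert e P) x = ind P x + (if snd e = x then 1 else 0)"
    unfolding ind_def s2 using assms by auto
  show ?thesis unfolding dv_def o i by auto
qed

lemma rtrancl_cut:
  assumes "(y, w) \<in> A\<^sup>*"
  shows "(y, w) \<in> {e\<in>A. snd e \<noteq> y}\<^sup>*"
  using assms
proof (induction rule: rtrancl_induct)
  case base then show ?case by simp
next
  case (step z z')
  show ?case
  proof (cases "z' = y")
    case True then show ?thesis by simp
  next
    case False
    then have "(z, z') \<in> {e\<in>A. snd e \<noteq> y}" using step by auto
    then show ?thesis by (rule rtrancl_into_rtrancl[OF step.IH])
  qed
qed

lemma path_subset:
  "finite A \<Longrightarrow> (v, w) \<in> A\<^sup>* \<Longrightarrow>
   \<exists>P\<subseteq>A. \<forall>x. dv P x = (if x = v then 1 else 0) - (if x = w then 1 else 0)"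
proof (induction "card A" arbitrary: A v rule: less_induct)
  case less
  show ?case
  proof (cases "v = w")
    case True
    then show ?thesis by (intro exI[of _ "{}"]) (auto simp: dv_def outd_def ind_def)
  next
    case False
    from less.prems(2) False obtain y where vy: "(v, y) \<in> A" and yw: "(y, w) \<in> A\<^sup>*"
      by (metis converse_rtranclE)
    define A' where "A' = {e\<in>A. snd e \<noteq> y}"
    have yw': "(y, w) \<in> A'\<^sup>*" unfolding A'_def using yw by (rule rtrancl_cut)
    have fin': "finite A'" unfolding A'_def using less.prems(1) by auto
    have "A' \<subseteq> A" unfolding A'_def by auto
    moreover have "(v, y) \<notin> A'" unfolding A'_def by auto
    ultimately have "A' \<subset> A" using vy by blast
    then have "card A' < card A" by (rule psubset_card_mono[OF less.prems(1)])
    from less.hyps[OF this fin' yw'] obtain P' where P': "P' \<subseteq> A'"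
      "\<forall>x. dv P' x = (if x = y then 1 else 0) - (if x = w then 1 else 0)" by blast
    have nin: "(v, y) \<notin> P'" using P'(1) unfolding A'_def by auto
    have finP: "finite P'" using P'(1) fin' finite_subset by blast
    show ?thesis
    proof (intro exI[of _ "insert (v, y) P'"] conjI allI)
      show "insert (v, y) P' \<subseteq> A" using P'(1) vy unfolding A'_def by auto
      fix x
      show "dv (insert (v, y) P') x = (if x = v then 1 else 0) - (if x = w then 1 else 0)"
        using dv_insert[OF finP nin, of x] P'(2) by auto
    qed
  qed
qed

lemma sum_card_fiber:
  assumes "finite A" "finite S"
  shows "(\<Sum>c\<in>S. card {e\<in>A. f e = c}) = card {e\<in>A. f e \<in> S}"
  using assms(2)
proof (induction S rule: finite_induct)
  case empty then show ?case by simp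
next
  case (insert c S)
  have "{e\<in>A. f e \<in> insert c S} = {e\<in>A. f e = c} \<union> {e\<in>A. f e \<in> S}" by auto
  moreover have "card ({e\<in>A. f e = c} \<union> {e\<in>A. f e \<in> S}) = card {e\<in>A. f e = c} + card {e\<in>A. f e \<in> S}"
    by (rule card_Un_disjoint) (use assms(1) insert in auto)
  ultimately show ?case using insert by simp
qed

lemma reach_neg:
  assumes fin: "finite A" and pos: "dv A v > 0"
  shows "\<exists>w. (v, w) \<in> A\<^sup>* \<and> dv A w < 0"
proof (rule ccontr)
  assume "\<not> ?thesis"
  then have nn: "\<And>w. (v, w) \<in> A\<^sup>* \<Longrightarrow> dv A w \<ge> 0" by force
  define S where "S = A\<^sup>* `` {v}"
  have Ssub: "S \<subseteq> insert v (snd ` A)"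
  proof
    fix x assume "x \<in> S"
    then have "(v, x) \<in> A\<^sup>*" unfolding S_def by auto
    then show "x \<in> insert v (snd ` A)"
    proof (cases rule: rtranclE)
      case (step y) then show ?thesis by (force intro: image_eqI[of _ _ "(y, x)"])
    qed simp
  qed
  have finS: "finite S" using Ssub fin finite_subset by blast
  have "(\<Sum>x\<in>S. outd A x) = card {e\<in>A. fst e \<in> S}"
    unfolding outd_def by (rule sum_card_fiber[OF fin finS])
  moreover have "(\<Sum>x\<in>S. ind A x) = card {e\<in>A. snd e \<in> S}"
    unfolding ind_def by (rule sum_card_fiber[OF fin finS])
  moreover have "card {e\<in>A. fst e \<in> S} \<le> card {e\<in>A. snd e \<in> S}"
  proof (rule card_mono)
    show "finite {e\<in>A. snd e \<in> S}" using fin by auto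
    show "{e\<in>A. fst e \<in> S} \<subseteq> {e\<in>A. snd e \<in> S}"
      unfolding S_def by (auto intro: rtrancl_into_rtrancl)
  qed
  ultimately have le: "(\<Sum>x\<in>S. dv A x) \<le> 0"
    unfolding dv_def by (simp add: sum_subtractf flip: of_nat_sum)
  have vS: "v \<in> S" unfolding S_def by auto
  have "dv A v \<le> (\<Sum>x\<in>S. dv A x)"
    by (rule member_le_sum[OF vS]) (use nn S_def finS in auto)
  then show False using pos le by linarith
qed

lemma reverse_dv:
  assumes fin: "finite B" and PB: "P \<subseteq> B" and asym: "converse B \<inter> B = {}"
  shows "dv ((B - P) \<union> converse P) x = dv B x - 2 * dv P x"
proof -
  have finP: "finite P" using fin PB finite_subset by blast
  have sw1: "{e \<in> converse P. fst e = x} = prod.swap ` {e\<in>P. snd e = x}" by force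
  have sw2: "{e \<in> converse P. snd e = x} = prod.swap ` {e\<in>P. fst e = x}" by force
  have c1: "card {e \<in> converse P. fst e = x} = ind P x"
    unfolding sw1 ind_def by (rule card_image) (auto intro: inj_onI)
  have c2: "card {e \<in> converse P. snd e = x} = outd P x"
    unfolding sw2 outd_def by (rule card_image) (auto intro: inj_onI)
  have dis: "(B - P) \<inter> converse P = {}" using asym PB by auto
  have o: "outd ((B - P) \<union> converse P) x = card {e\<in>B - P. fst e = x} + card {e \<in> converse P. fst e = x}"
    unfolding outd_def
    by (subst card_Un_disjoint[symmetric]) (use fin finP dis in \<open>auto intro: arg_cong[where f=card]\<close>)
  have i: "ind ((B - P) \<union> converse P) x = card {e\<in>B - P. snd e = x} + card {e \<in> converse P. snd e = x}"
    unfolding ind_def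
    by (subst card_Un_disjoint[symmetric]) (use fin finP dis in \<open>auto intro: arg_cong[where f=card]\<close>)
  have d1: "{e\<in>B - P. fst e = x} = {e\<in>B. fst e = x} - {e\<in>P. fst e = x}" by auto
  have d2: "{e\<in>B - P. snd e = x} = {e\<in>B. snd e = x} - {e\<in>P. snd e = x}" by auto
  have e1: "card {e\<in>B - P. fst e = x} = outd B x - outd P x"
    unfolding d1 outd_def by (rule card_Diff_subset) (use finP PB in auto)
  have e2: "card {e\<in>B - P. snd e = x} = ind B x - ind P x"
    unfolding d2 ind_def by (rule card_Diff_subset) (use finP PB in auto)
  have m1: "outd P x \<le> outd B x" unfolding outd_def by (rule card_mono) (use fin PB in auto)
  have m2: "ind P x \<le> ind B x" unfolding ind_def by (rule card_mono) (use fin PB in auto)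
  show ?thesis unfolding dv_def o i e1 e2 c1 c2 using m1 m2 by simp
qed

lemma dv_converse: "dv (converse A) x = - dv A x"
proof -
  have "outd (converse A) x = ind A x"
    unfolding outd_def ind_def
    by (rule bij_betw_same_card[of prod.swap]) (auto simp: bij_betw_def inj_on_def image_iff)
  moreover have "ind (converse A) x = outd A x"
    unfolding outd_def ind_def
    by (rule bij_betw_same_card[of prod.swap]) (auto simp: bij_betw_def inj_on_def image_iff)
  ultimately show ?thesis unfolding dv_def by simp
qed

definition orient :: "'a set \<Rightarrow> 'a set set \<Rightarrow> ('a \<times> 'a) set \<Rightarrow> bool" where
  "orient V E A \<longleftrightarrow> A \<subseteq> V \<times> V \<and> (\<forall>(a,b)\<in>A. a \<noteq> b \<and> {a,b} \<in> E) \<and>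
     converse A \<inter> A = {} \<and> (\<forall>e\<in>E. \<exists>a b. e = {a,b} \<and> (a,b) \<in> A)"

lemma orient_exists:
  assumes "simple_graph V E" shows "\<exists>A. orient V E A"
proof -
  define g where "g e = (SOME x. x \<in> e)" for e :: "'a set"
  define A where "A = {(a,b). a \<noteq> b \<and> {a,b} \<in> E \<and> g {a,b} = a}"
  have EV: "\<forall>e\<in>E. \<exists>u v. u \<noteq> v \<and> u \<in> V \<and> v \<in> V \<and> e = {u, v}"
    using assms unfolding simple_graph_def by blast
  have "A \<subseteq> V \<times> V"
  proof
    fix p assume "p \<in> A"
    then obtain a b where p: "p = (a,b)" "a \<noteq> b" "{a,b} \<in> E" unfolding A_def by auto
    then obtain u v where "u \<in> V" "v \<in> V" "{a,b} = {u,v}" using EV by blast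
    then show "p \<in> V \<times> V" using p by (auto simp: doubleton_eq_iff)
  qed
  moreover have "\<forall>(a,b)\<in>A. a \<noteq> b \<and> {a,b} \<in> E" unfolding A_def by auto
  moreover have "converse A \<inter> A = {}"
    unfolding A_def by (auto simp: insert_commute)
  moreover have "\<forall>e\<in>E. \<exists>a b. e = {a,b} \<and> (a,b) \<in> A"
  proof
    fix e assume eE: "e \<in> E"
    then obtain u v where uv: "u \<noteq> v" "e = {u,v}" using EV by blast
    have "g e \<in> e" unfolding g_def using uv by (metis insertI1 someI_ex)
    then have "g e = u \<or> g e = v" using uv by auto
    then show "\<exists>a b. e = {a,b} \<and> (a,b) \<in> A"
    proof
      assume "g e = u" then show ?thesis using uv eE unfolding A_def by auto
    next
      assume "g e = v"
      have evu: "e = {v,u}" using uv by (simp add: insert_commute)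
      have "(v,u) \<in> A" unfolding A_def using uv(1) eE \<open>g e = v\<close> evu by simp
      then show ?thesis using evu by blast
    qed
  qed
  ultimately have "orient V E A" unfolding orient_def by (intro conjI)
  then show ?thesis by blast
qed

lemma orientD:
  assumes "orient V E A" "(a,b) \<in> A"
  shows "a \<noteq> b" "{a,b} \<in> E" "{b,a} \<in> E" "a \<in> V" "b \<in> V" "(b,a) \<notin> A"
proof -
  show "a \<noteq> b" "{a,b} \<in> E" using assms unfolding orient_def by auto
  then show "{b,a} \<in> E" by (simp add: insert_commute)
  show "a \<in> V" "b \<in> V" using assms unfolding orient_def by auto
  show "(b,a) \<notin> A" using assms unfolding orient_def by blast
qed

lemma orient_cover: "orient V E A \<Longrightarrow> e \<in> E \<Longrightarrow> \<exists>a b. e = {a,b} \<and> (a,b) \<in> A"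
  unfolding orient_def by blast

lemma orientI:
  assumes "\<And>a b. (a,b) \<in> A \<Longrightarrow> a \<noteq> b \<and> {a,b} \<in> E \<and> a \<in> V \<and> b \<in> V \<and> (b,a) \<notin> A"
    and "\<And>e. e \<in> E \<Longrightarrow> \<exists>a b. e = {a,b} \<and> (a,b) \<in> A"
  shows "orient V E A"
  unfolding orient_def
proof (intro conjI)
  show "A \<subseteq> V \<times> V" using assms(1) by auto
  show "\<forall>(a, b)\<in>A. a \<noteq> b \<and> {a, b} \<in> E" using assms(1) by auto
  show "A\<inverse> \<inter> A = {}" using assms(1) by auto
  show "\<forall>e\<in>E. \<exists>a b. e = {a, b} \<and> (a, b) \<in> A" using assms(2) by blast
qed

lemma orient_converse: assumes o: "orient V E A" shows "orient V E (converse A)"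
proof (rule orientI)
  fix a b assume "(a,b) \<in> converse A"
  then have "(b,a) \<in> A" by simp
  then show "a \<noteq> b \<and> {a,b} \<in> E \<and> a \<in> V \<and> b \<in> V \<and> (b,a) \<notin> converse A"
    using orientD[OF o \<open>(b,a) \<in> A\<close>] by auto
next
  fix e assume "e \<in> E"
  then obtain a b where ab: "e = {a,b}" "(a,b) \<in> A" using orient_cover[OF o] by blast
  then have "e = {b,a}" "(b,a) \<in> converse A" by (auto simp: insert_commute)
  then show "\<exists>a b. e = {a, b} \<and> (a, b) \<in> converse A" by blast
qed

lemma orient_reverse:
  assumes o: "orient V E A" and PA: "P \<subseteq> A"
  shows "orient V E ((A - P) \<union> converse P)"
proof (rule orientI)
  fix a b assume ab: "(a,b) \<in> (A - P) \<union> converse P"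
  show "a \<noteq> b \<and> {a,b} \<in> E \<and> a \<in> V \<and> b \<in> V \<and> (b,a) \<notin> (A - P) \<union> converse P"
  proof (cases "(a,b) \<in> A - P")
    case True
    then have "(a,b) \<in> A" "(a,b) \<notin> P" by auto
    then show ?thesis using orientD[OF o \<open>(a,b) \<in> A\<close>] PA by auto
  next
    case False
    then have "(b,a) \<in> P" using ab by auto
    then have "(b,a) \<in> A" using PA by auto
    then show ?thesis using orientD[OF o \<open>(b,a) \<in> A\<close>] PA \<open>(b,a) \<in> P\<close> by auto
  qed
next
  fix e assume "e \<in> E"
  then obtain a b where ab: "e = {a,b}" "(a,b) \<in> A" using orient_cover[OF o] by blast
  show "\<exists>a b. e = {a, b} \<and> (a, b) \<in> A - P \<union> P\<inverse>"
  proof (cases "(a,b) \<in> P")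
    case True
    then have "e = {b,a}" "(b,a) \<in> converse P" using ab by (auto simp: insert_commute)
    then show ?thesis by blast
  next
    case False then show ?thesis using ab by blast
  qed
qed

lemma dv_outside: "A \<subseteq> V \<times> V \<Longrightarrow> x \<notin> V \<Longrightarrow> dv A x = 0"
  unfolding dv_def outd_def ind_def
proof -
  assume "A \<subseteq> V \<times> V" "x \<notin> V"
  then have e1: "{e\<in>A. fst e = x} = {}" and e2: "{e\<in>A. snd e = x} = {}" by force+
  show "int (card {e \<in> A. fst e = x}) - int (card {e \<in> A. snd e = x}) = 0"
    by (simp only: e1 e2 card.empty) 
qed

lemma sq_dec: "(d::int) \<ge> 2 \<Longrightarrow> (d - 2)^2 < d^2"
proof -
  assume "d \<ge> 2"
  moreover have "(d - 2)^2 = d^2 - 4*d + 4" by algebra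
  ultimately show ?thesis by simp
qed

lemma sq_inc: "(e::int) \<le> -1 \<Longrightarrow> (e + 2)^2 \<le> e^2"
proof -
  assume "e \<le> -1"
  moreover have "(e + 2)^2 = e^2 + 4*e + 4" by algebra
  ultimately show ?thesis by simp
qed

definition Phi1 :: "'a set \<Rightarrow> ('a \<times> 'a) set \<Rightarrow> int" where
  "Phi1 V A = (\<Sum>x\<in>V. (dv A x)^2)"

lemma Phi1_converse: "Phi1 V (converse A) = Phi1 V A"
  unfolding Phi1_def dv_converse by simp

lemma improve1:
  assumes sg: "simple_graph V E" and o: "orient V E A" and x2: "dv A x \<ge> 2"
  shows "\<exists>A'. orient V E A' \<and> Phi1 V A' < Phi1 V A"
proof -
  have finV: "finite V" using sg unfolding simple_graph_def by auto
  have AV: "A \<subseteq> V \<times> V" using o unfolding orient_def by auto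
  have finA: "finite A" using AV finV finite_subset by blast
  have xV: "x \<in> V" using dv_outside[OF AV] x2 by force
  obtain w where xw: "(x, w) \<in> A\<^sup>*" and wneg: "dv A w < 0"
    using reach_neg[OF finA] x2 by force
  have xnw: "x \<noteq> w" using x2 wneg by auto
  obtain P where PA: "P \<subseteq> A" and dP: "\<forall>y. dv P y = (if y = x then 1 else 0) - (if y = w then 1 else 0)"
    using path_subset[OF finA xw] by blast
  define A' where "A' = (A - P) \<union> converse P"
  have o': "orient V E A'" unfolding A'_def by (rule orient_reverse[OF o PA])
  have asym: "converse A \<inter> A = {}" using o unfolding orient_def by auto
  have dA': "\<And>y. dv A' y = dv A y - 2 * dv P y" unfolding A'_def by (rule reverse_dv[OF finA PA asym])
  have le: "\<forall>y\<in>V. (dv A' y)^2 \<le> (dv A y)^2"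
  proof
    fix y assume "y \<in> V"
    show "(dv A' y)^2 \<le> (dv A y)^2"
    proof (cases "y = x")
      case True
      then have "dv A' y = dv A x - 2" using dA' dP xnw by simp
      then show ?thesis using True sq_dec[OF x2] by simp
    next
      case False
      show ?thesis
      proof (cases "y = w")
        case True
        then have "dv A' y = dv A w + 2" using dA' dP xnw by simp
        then show ?thesis using True sq_inc[of "dv A w"] wneg by simp
      next
        case False2: False
        then show ?thesis using dA' dP False by simp
      qed
    qed
  qed
  have lt: "\<exists>y\<in>V. (dv A' y)^2 < (dv A y)^2"
  proof
    have "dv A' x = dv A x - 2" using dA' dP xnw by simp
    then show "(dv A' x)^2 < (dv A x)^2" using sq_dec[OF x2] by simp
  qed (rule xV)
  have "Phi1 V A' < Phi1 V A" unfolding Phi1_def by (rule sum_strict_mono_ex1[OF finV le lt])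
  then show ?thesis using o' by blast
qed

lemma balanced:
  assumes sg: "simple_graph V E"
  shows "\<exists>A. orient V E A \<and> (\<forall>x. \<bar>dv A x\<bar> \<le> 1)"
proof -
  obtain A0 where "orient V E A0" using orient_exists[OF sg] by blast
  then obtain A where oA: "orient V E A" and mn: "\<forall>B. orient V E B \<longrightarrow> nat (Phi1 V A) \<le> nat (Phi1 V B)"
    using ex_has_least_nat[of "orient V E" A0 "\<lambda>B. nat (Phi1 V B)"] by blast
  have nn: "\<And>B. Phi1 V B \<ge> 0" unfolding Phi1_def by (simp add: sum_nonneg)
  have mn': "\<And>B. orient V E B \<Longrightarrow> Phi1 V A \<le> Phi1 V B" using mn nn
  proof -
    fix B assume "orient V E B"
    then have "nat (Phi1 V A) \<le> nat (Phi1 V B)" using mn by blast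
    then show "Phi1 V A \<le> Phi1 V B" using nn[of A] nn[of B] by linarith
  qed
  have "\<bar>dv A x\<bar> \<le> 1" for x
  proof (rule ccontr)
    assume "\<not> \<bar>dv A x\<bar> \<le> 1"
    then have "dv A x \<ge> 2 \<or> dv (converse A) x \<ge> 2" unfolding dv_converse by linarith
    then show False
    proof
      assume "dv A x \<ge> 2"
      then obtain A' where "orient V E A'" "Phi1 V A' < Phi1 V A" using improve1[OF sg oA] by blast
      then show False using mn' by force
    next
      assume "dv (converse A) x \<ge> 2"
      then obtain A' where "orient V E A'" "Phi1 V A' < Phi1 V (converse A)"
        using improve1[OF sg orient_converse[OF oA]] by blast
      then show False using mn'[of A'] Phi1_converse[of V A] by linarith
    qed
  qed
  then show ?thesis using oA by blast
qed

definition fT :: "'a \<times> 'a \<Rightarrow> ('a \<times> bool) \<times> ('a \<times> bool)" where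
  "fT e = ((fst e, True), (snd e, False))"
definition fF :: "'a \<times> 'a \<Rightarrow> ('a \<times> bool) \<times> ('a \<times> bool)" where
  "fF e = ((snd e, False), (fst e, True))"

definition oc :: "('a \<times> 'a) set \<Rightarrow> ('a \<times> 'a \<Rightarrow> nat) \<Rightarrow> nat \<Rightarrow> 'a \<Rightarrow> nat" where
  "oc A col c x = card {e\<in>A. fst e = x \<and> col e = c}"
definition ic :: "('a \<times> 'a) set \<Rightarrow> ('a \<times> 'a \<Rightarrow> nat) \<Rightarrow> nat \<Rightarrow> 'a \<Rightarrow> nat" where
  "ic A col c x = card {e\<in>A. snd e = x \<and> col e = c}"

definition Bc :: "('a \<times> 'a) set \<Rightarrow> ('a \<times> 'a \<Rightarrow> nat) \<Rightarrow> nat \<Rightarrow> nat \<Rightarrow> (('a \<times> bool) \<times> ('a \<times> bool)) set" where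
  "Bc A col \<alpha> \<beta> = fT ` {e\<in>A. col e = \<alpha>} \<union> fF ` {e\<in>A. col e = \<beta>}"

lemma inj_fT: "inj fT" unfolding fT_def by (auto intro!: injI simp: prod_eq_iff)
lemma inj_fF: "inj fF" unfolding fF_def by (auto intro!: injI simp: prod_eq_iff)
lemma fT_fF: "fT e \<noteq> fF e'" unfolding fT_def fF_def by auto

lemma dvB:
  assumes ab: "\<alpha> \<noteq> \<beta>"
  shows "dv (Bc A col \<alpha> \<beta>) (x, True) = int (oc A col \<alpha> x) - int (oc A col \<beta> x)"
    and "dv (Bc A col \<alpha> \<beta>) (x, False) = int (ic A col \<beta> x) - int (ic A col \<alpha> x)"
proof -
  have s1: "{q\<in>Bc A col \<alpha> \<beta>. fst q = (x, True)} = fT ` {e\<in>A. fst e = x \<and> col e = \<alpha>}"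
    unfolding Bc_def fT_def fF_def by auto
  have s2: "{q\<in>Bc A col \<alpha> \<beta>. snd q = (x, True)} = fF ` {e\<in>A. fst e = x \<and> col e = \<beta>}"
    unfolding Bc_def fT_def fF_def by auto
  have s3: "{q\<in>Bc A col \<alpha> \<beta>. fst q = (x, False)} = fF ` {e\<in>A. snd e = x \<and> col e = \<beta>}"
    unfolding Bc_def fT_def fF_def by auto
  have s4: "{q\<in>Bc A col \<alpha> \<beta>. snd q = (x, False)} = fT ` {e\<in>A. snd e = x \<and> col e = \<alpha>}"
    unfolding Bc_def fT_def fF_def by auto
  have iT: "\<And>S. card (fT ` S) = card S" by (rule card_image) (rule inj_on_subset[OF inj_fT], simp)
  have iF: "\<And>S. card (fF ` S) = card S" by (rule card_image) (rule inj_on_subset[OF inj_fF], simp)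
  show "dv (Bc A col \<alpha> \<beta>) (x, True) = int (oc A col \<alpha> x) - int (oc A col \<beta> x)"
    unfolding dv_def outd_def ind_def s1 s2 iT iF oc_def ..
  show "dv (Bc A col \<alpha> \<beta>) (x, False) = int (ic A col \<beta> x) - int (ic A col \<alpha> x)"
    unfolding dv_def outd_def ind_def s3 s4 iT iF ic_def ..
qed

lemma Bc_finite: "finite A \<Longrightarrow> finite (Bc A col \<alpha> \<beta>)"
  unfolding Bc_def by auto

lemma Bc_asym: "\<alpha> \<noteq> \<beta> \<Longrightarrow> converse (Bc A col \<alpha> \<beta>) \<inter> Bc A col \<alpha> \<beta> = {}"
  unfolding Bc_def fT_def fF_def by (auto simp: prod_eq_iff)

definition recol :: "('a \<times> 'a \<Rightarrow> nat) \<Rightarrow> nat \<Rightarrow> nat \<Rightarrow> (('a \<times> bool) \<times> ('a \<times> bool)) set \<Rightarrow> 'a \<times> 'a \<Rightarrow> nat" where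
  "recol col \<alpha> \<beta> P e = (if col e = \<alpha> \<and> fT e \<in> P then \<beta> else if col e = \<beta> \<and> fF e \<in> P then \<alpha> else col e)"

lemma memT: "fT e \<in> Bc A col \<alpha> \<beta> \<longleftrightarrow> e \<in> A \<and> col e = \<alpha>"
proof -
  have "fT e \<notin> fF ` S" for S using fT_fF by (metis imageE)
  moreover have "fT e \<in> fT ` S \<longleftrightarrow> e \<in> S" for S using injD[OF inj_fT] by blast
  ultimately show ?thesis unfolding Bc_def by auto
qed

lemma memF: "fF e \<in> Bc A col \<alpha> \<beta> \<longleftrightarrow> e \<in> A \<and> col e = \<beta>"
proof -
  have "fF e \<notin> fT ` S" for S using fT_fF by (metis imageE)
  moreover have "fF e \<in> fF ` S \<longleftrightarrow> e \<in> S" for S using injD[OF inj_fF] by blast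
  ultimately show ?thesis unfolding Bc_def by auto
qed

lemma swT: "prod.swap (fT e) = fF e" unfolding fT_def fF_def by auto
lemma swF: "prod.swap (fF e) = fT e" unfolding fT_def fF_def by auto

lemma Bc_shape: "q \<in> Bc A col \<alpha> \<beta> \<Longrightarrow> (\<exists>e. q = fT e) \<or> (\<exists>e. q = fF e)"
  unfolding Bc_def by auto

lemma Bc_recol:
  assumes ab: "\<alpha> \<noteq> \<beta>" and PB: "P \<subseteq> Bc A col \<alpha> \<beta>"
  shows "Bc A (recol col \<alpha> \<beta> P) \<alpha> \<beta> = (Bc A col \<alpha> \<beta> - P) \<union> converse P"
proof -
  let ?c = "recol col \<alpha> \<beta> P"
  let ?B = "Bc A col \<alpha> \<beta>"
  have cvT: "fT e \<in> converse P \<longleftrightarrow> fF e \<in> P" for e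
    by (metis converse_iff prod.collapse swF swT swap_simp)
  have cvF: "fF e \<in> converse P \<longleftrightarrow> fT e \<in> P" for e
    by (metis converse_iff prod.collapse swF swT swap_simp)
  have PT: "fT e \<in> P \<Longrightarrow> e \<in> A \<and> col e = \<alpha>" for e using PB memT by blast
  have PF: "fF e \<in> P \<Longrightarrow> e \<in> A \<and> col e = \<beta>" for e using PB memF by blast
  have T: "fT e \<in> Bc A ?c \<alpha> \<beta> \<longleftrightarrow> fT e \<in> (?B - P) \<union> converse P" for e
    unfolding memT Un_iff Diff_iff cvT memT recol_def using PF[of e] ab by auto
  have F: "fF e \<in> Bc A ?c \<alpha> \<beta> \<longleftrightarrow> fF e \<in> (?B - P) \<union> converse P" for e
    unfolding memF Un_iff Diff_iff cvF memF recol_def using PT[of e] ab by auto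
  have shape2: "q \<in> (?B - P) \<union> converse P \<Longrightarrow> (\<exists>e. q = fT e) \<or> (\<exists>e. q = fF e)" for q
  proof -
    assume "q \<in> (?B - P) \<union> converse P"
    then have "q \<in> ?B \<or> prod.swap q \<in> ?B" using PB by (auto simp: prod.swap_def)
    then show ?thesis
      by (metis Bc_shape swF swT swap_swap)
  qed
  show ?thesis
  proof (rule set_eqI)
    fix q
    show "q \<in> Bc A ?c \<alpha> \<beta> \<longleftrightarrow> q \<in> (?B - P) \<union> converse P"
    proof (cases "(\<exists>e. q = fT e) \<or> (\<exists>e. q = fF e)")
      case True then show ?thesis using T F by (elim disjE exE) simp_all
    next
      case False then show ?thesis using Bc_shape shape2 by blast
    qed
  qed
qed

lemma recol_other: "c \<noteq> \<alpha> \<Longrightarrow> c \<noteq> \<beta> \<Longrightarrow> (recol col \<alpha> \<beta> P e = c) = (col e = c)"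
  unfolding recol_def by auto

lemma recol_ab: "(recol col \<alpha> \<beta> P e \<in> {\<alpha>, \<beta>}) = (col e \<in> {\<alpha>, \<beta>})"
  unfolding recol_def by auto

lemma card_pair_split:
  assumes "finite A" "\<alpha> \<noteq> \<beta>"
  shows "card {e\<in>A. Q e \<and> col e = \<alpha>} + card {e\<in>A. Q e \<and> col e = \<beta>} = card {e\<in>A. Q e \<and> col e \<in> {\<alpha>, \<beta>}}"
proof -
  have "{e\<in>A. Q e \<and> col e \<in> {\<alpha>, \<beta>}} = {e\<in>A. Q e \<and> col e = \<alpha>} \<union> {e\<in>A. Q e \<and> col e = \<beta>}" by auto
  moreover have "card ({e\<in>A. Q e \<and> col e = \<alpha>} \<union> {e\<in>A. Q e \<and> col e = \<beta>}) =
     card {e\<in>A. Q e \<and> col e = \<alpha>} + card {e\<in>A. Q e \<and> col e = \<beta>}"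
    by (rule card_Un_disjoint) (use assms in auto)
  ultimately show ?thesis by simp
qed

lemma oc_sum_recol:
  assumes "finite A" "\<alpha> \<noteq> \<beta>"
  shows "oc A (recol col \<alpha> \<beta> P) \<alpha> x + oc A (recol col \<alpha> \<beta> P) \<beta> x = oc A col \<alpha> x + oc A col \<beta> x"
    and "ic A (recol col \<alpha> \<beta> P) \<alpha> x + ic A (recol col \<alpha> \<beta> P) \<beta> x = ic A col \<alpha> x + ic A col \<beta> x"
  unfolding oc_def ic_def card_pair_split[OF assms] recol_ab by simp_all

lemma oc_other_recol:
  assumes "c \<noteq> \<alpha>" "c \<noteq> \<beta>"
  shows "oc A (recol col \<alpha> \<beta> P) c x = oc A col c x" "ic A (recol col \<alpha> \<beta> P) c x = ic A col c x"
  unfolding oc_def ic_def recol_other[OF assms] by simp_all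

lemma node_ineq:
  fixes a b a' b' :: nat and \<delta> d :: int
  assumes "int a' = int a - \<delta>" "int b' = int b + \<delta>" "d = int a - int b"
    and "\<delta> = 0 \<or> (\<delta> = 1 \<and> d \<ge> 2) \<or> (\<delta> = -1 \<and> d \<le> -1)"
  shows "a'^2 + b'^2 \<le> a^2 + b^2" and "\<delta> = 1 \<Longrightarrow> a'^2 + b'^2 < a^2 + b^2"
proof -
  have eq: "int (a'^2 + b'^2) = int (a^2 + b^2) - 2 * \<delta> * d + 2 * \<delta>^2"
    unfolding of_nat_add of_nat_power assms(1,2,3) by algebra
  from assms(4) have "- 2 * \<delta> * d + 2 * \<delta>^2 \<le> 0 \<and> (\<delta> = 1 \<longrightarrow> - 2 * \<delta> * d + 2 * \<delta>^2 < 0)"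
    by (elim disjE) (auto simp: power2_eq_square)
  then show "a'^2 + b'^2 \<le> a^2 + b^2" and "\<delta> = 1 \<Longrightarrow> a'^2 + b'^2 < a^2 + b^2"
    using eq by linarith+
qed

lemma sum_two:
  assumes "finite S" "\<alpha> \<in> S" "\<beta> \<in> S" "\<alpha> \<noteq> \<beta>"
  shows "sum g S = g \<alpha> + g \<beta> + sum g (S - {\<alpha>, \<beta>})"
proof -
  have "sum g S = g \<alpha> + sum g (S - {\<alpha>})" using assms by (simp add: sum.remove)
  moreover have "sum g (S - {\<alpha>}) = g \<beta> + sum g (S - {\<alpha>} - {\<beta>})" using assms by (simp add: sum.remove)
  moreover have "S - {\<alpha>} - {\<beta>} = S - {\<alpha>, \<beta>}" by auto
  ultimately show ?thesis by (simp add: add.assoc)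
qed

definition Tm :: "('a \<times> 'a) set \<Rightarrow> nat \<Rightarrow> ('a \<times> 'a \<Rightarrow> nat) \<Rightarrow> 'a \<Rightarrow> nat" where
  "Tm A K col x = (\<Sum>c<K. (oc A col c x)^2 + (ic A col c x)^2)"

definition Phi2 :: "'a set \<Rightarrow> ('a \<times> 'a) set \<Rightarrow> nat \<Rightarrow> ('a \<times> 'a \<Rightarrow> nat) \<Rightarrow> nat" where
  "Phi2 V A K col = (\<Sum>x\<in>V. Tm A K col x)"

lemma improve2:
  assumes finA: "finite A" and val: "\<forall>e\<in>A. col e < K" and aK: "\<alpha> < K" and bK: "\<beta> < K"
    and ab: "\<alpha> \<noteq> \<beta>" and finV: "finite V" and x0V: "x0 \<in> V"
    and v2: "dv (Bc A col \<alpha> \<beta>) (x0, bo) \<ge> 2"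
  shows "\<exists>col'. (\<forall>e\<in>A. col' e < K) \<and> Phi2 V A K col' < Phi2 V A K col"
proof -
  define B where "B = Bc A col \<alpha> \<beta>"
  define v where "v = (x0, bo)"
  have finB: "finite B" unfolding B_def by (rule Bc_finite[OF finA])
  obtain w where vw: "(v, w) \<in> B\<^sup>*" and wneg: "dv B w < 0"
    using reach_neg[OF finB] v2 unfolding B_def v_def by force
  have vnw: "v \<noteq> w" using v2 wneg unfolding B_def v_def by auto
  obtain P where PB: "P \<subseteq> B" and dP: "\<forall>n. dv P n = (if n = v then 1 else 0) - (if n = w then 1 else 0)"
    using path_subset[OF finB vw] by blast
  define col' where "col' = recol col \<alpha> \<beta> P"
  have val': "\<forall>e\<in>A. col' e < K" using val aK bK unfolding col'_def recol_def by auto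
  have B': "Bc A col' \<alpha> \<beta> = (B - P) \<union> converse P"
    unfolding col'_def B_def by (rule Bc_recol[OF ab PB[unfolded B_def]])
  have dB': "\<And>n. dv (Bc A col' \<alpha> \<beta>) n = dv B n - 2 * dv P n"
    unfolding B' by (rule reverse_dv[OF finB PB]) (unfold B_def, rule Bc_asym[OF ab])
  have v2': "dv B v \<ge> 2" using v2 unfolding B_def v_def .
  have cond: "dv P n = 0 \<or> (dv P n = 1 \<and> dv B n \<ge> 2) \<or> (dv P n = -1 \<and> dv B n \<le> -1)" for n
  proof (cases "n = v")
    case True
    have "dv P v = 1" using dP[rule_format, of v] vnw by simp
    then show ?thesis using True v2' by simp
  next
    case False
    show ?thesis
    proof (cases "n = w")
      case True
      have "dv P w = -1" using dP[rule_format, of w] vnw by simp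
      then show ?thesis using True wneg by simp
    next
      case False2: False
      have "dv P n = 0" using dP[rule_format, of n] False False2 by simp
      then show ?thesis by simp
    qed
  qed
  have node: "Tm A K col' x \<le> Tm A K col x \<and>
      ((x, True) = v \<or> (x, False) = v \<longrightarrow> Tm A K col' x < Tm A K col x)" for x
  proof -
    let ?dT = "dv P (x, True)" and ?dF = "dv P (x, False)"
    have hT: "int (oc A col' \<alpha> x) - int (oc A col' \<beta> x) = int (oc A col \<alpha> x) - int (oc A col \<beta> x) - 2 * ?dT"
      using dB'[of "(x, True)"] dvB(1)[OF ab, of A col' x] dvB(1)[OF ab, of A col x] unfolding B_def by simp
    have hF: "int (ic A col' \<beta> x) - int (ic A col' \<alpha> x) = int (ic A col \<beta> x) - int (ic A col \<alpha> x) - 2 * ?dF"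
      using dB'[of "(x, False)"] dvB(2)[OF ab, of A col' x] dvB(2)[OF ab, of A col x] unfolding B_def by simp
    have sT: "oc A col' \<alpha> x + oc A col' \<beta> x = oc A col \<alpha> x + oc A col \<beta> x"
      unfolding col'_def by (rule oc_sum_recol(1)[OF finA ab])
    have sF: "ic A col' \<alpha> x + ic A col' \<beta> x = ic A col \<alpha> x + ic A col \<beta> x"
      unfolding col'_def by (rule oc_sum_recol(2)[OF finA ab])
    have dT: "dv B (x, True) = int (oc A col \<alpha> x) - int (oc A col \<beta> x)" unfolding B_def by (rule dvB(1)[OF ab])
    have dF: "dv B (x, False) = int (ic A col \<beta> x) - int (ic A col \<alpha> x)" unfolding B_def by (rule dvB(2)[OF ab])
    have nT: "int (oc A col' \<alpha> x) = int (oc A col \<alpha> x) - ?dT" "int (oc A col' \<beta> x) = int (oc A col \<beta> x) + ?dT"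
      using hT sT by linarith+
    have nF: "int (ic A col' \<beta> x) = int (ic A col \<beta> x) - ?dF" "int (ic A col' \<alpha> x) = int (ic A col \<alpha> x) + ?dF"
      using hF sF by linarith+
    note iT = node_ineq[OF nT dT cond[of "(x, True)"]]
    note iF = node_ineq[OF nF dF cond[of "(x, False)"]]
    let ?g = "\<lambda>cl c. (oc A cl c x)^2 + (ic A cl c x)^2"
    have rest: "sum (?g col') ({..<K} - {\<alpha>, \<beta>}) = sum (?g col) ({..<K} - {\<alpha>, \<beta>})"
      by (rule sum.cong) (auto simp: col'_def oc_other_recol)
    have split: "Tm A K cl x = ?g cl \<alpha> + ?g cl \<beta> + sum (?g cl) ({..<K} - {\<alpha>, \<beta>})" for cl
      unfolding Tm_def by (rule sum_two) (use aK bK ab in auto)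
    have le: "?g col' \<alpha> + ?g col' \<beta> \<le> ?g col \<alpha> + ?g col \<beta>" using iT(1) iF(1) by simp
    have lt: "(x, True) = v \<or> (x, False) = v \<Longrightarrow> ?g col' \<alpha> + ?g col' \<beta> < ?g col \<alpha> + ?g col \<beta>"
    proof -
      assume "(x, True) = v \<or> (x, False) = v"
      then show ?thesis
      proof
        assume "(x, True) = v"
        then have "?dT = 1" using dP[rule_format, of "(x, True)"] vnw by simp
        then show ?thesis using iT(2) iF(1) by simp
      next
        assume "(x, False) = v"
        then have "?dF = 1" using dP[rule_format, of "(x, False)"] vnw by simp
        then show ?thesis using iT(1) iF(2) by simp
      qed
    qed
    show ?thesis using le lt split[of col] split[of col'] rest by simp
  qed
  have "Phi2 V A K col' < Phi2 V A K col"
    unfolding Phi2_def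
  proof (rule sum_strict_mono_ex1[OF finV])
    show "\<forall>x\<in>V. Tm A K col' x \<le> Tm A K col x" using node by blast
    show "\<exists>x\<in>V. Tm A K col' x < Tm A K col x"
      using node[of x0] x0V unfolding v_def by (cases bo) auto
  qed
  then show ?thesis using val' by blast
qed

lemma pig:
  fixes h :: "nat \<Rightarrow> nat"
  assumes "\<alpha> < K" "h \<alpha> \<ge> 2" "\<forall>c<K. h c \<ge> 1"
  shows "(\<Sum>c<K. h c) \<ge> Suc K"
proof -
  have "(\<Sum>c<K. h c) = h \<alpha> + (\<Sum>c\<in>{..<K} - {\<alpha>}. h c)"
    using assms(1) by (simp add: sum.remove)
  moreover have "(\<Sum>c\<in>{..<K} - {\<alpha>}. h c) \<ge> (\<Sum>c\<in>{..<K} - {\<alpha>}. 1)"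
    by (rule sum_mono) (use assms(3) in auto)
  moreover have "card ({..<K} - {\<alpha>}) = K - 1" using assms(1) by simp
  ultimately show ?thesis using assms by simp
qed

lemma out_sum:
  assumes "finite A" "\<forall>e\<in>A. col e < K"
  shows "outd A x = (\<Sum>c<K. oc A col c x)" and "ind A x = (\<Sum>c<K. ic A col c x)"
proof -
  have f1: "finite {e\<in>A. fst e = x}" "finite {e\<in>A. snd e = x}" using assms(1) by auto
  have "(\<Sum>c<K. card {e\<in>{e\<in>A. fst e = x}. col e = c}) = card {e\<in>{e\<in>A. fst e = x}. col e \<in> {..<K}}"
    by (rule sum_card_fiber[OF f1(1)]) simp
  moreover have "{e\<in>{e\<in>A. fst e = x}. col e \<in> {..<K}} = {e\<in>A. fst e = x}" using assms(2) by auto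
  moreover have "\<And>c. {e\<in>{e\<in>A. fst e = x}. col e = c} = {e\<in>A. fst e = x \<and> col e = c}" by auto
  ultimately show "outd A x = (\<Sum>c<K. oc A col c x)" unfolding outd_def oc_def by simp
  have "(\<Sum>c<K. card {e\<in>{e\<in>A. snd e = x}. col e = c}) = card {e\<in>{e\<in>A. snd e = x}. col e \<in> {..<K}}"
    by (rule sum_card_fiber[OF f1(2)]) simp
  moreover have "{e\<in>{e\<in>A. snd e = x}. col e \<in> {..<K}} = {e\<in>A. snd e = x}" using assms(2) by auto
  moreover have "\<And>c. {e\<in>{e\<in>A. snd e = x}. col e = c} = {e\<in>A. snd e = x \<and> col e = c}" by auto
  ultimately show "ind A x = (\<Sum>c<K. ic A col c x)" unfolding ind_def ic_def by simp
qed

lemma good_col: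
  assumes finA: "finite A" and finV: "finite V" and bd: "\<forall>x. outd A x \<le> K \<and> ind A x \<le> K"
    and AV: "\<forall>e\<in>A. fst e \<in> V \<and> snd e \<in> V" and K0: "A \<noteq> {} \<longrightarrow> K > 0"
  shows "\<exists>col. (\<forall>e\<in>A. col e < K) \<and> (\<forall>x c. oc A col c x \<le> 1 \<and> ic A col c x \<le> 1)"
proof -
  let ?val = "\<lambda>col. \<forall>e\<in>A. col e < K"
  have "?val (\<lambda>_. 0)" using K0 by auto
  then obtain col where val: "?val col" and mn: "\<forall>col'. ?val col' \<longrightarrow> Phi2 V A K col \<le> Phi2 V A K col'"
    using ex_has_least_nat[of ?val "\<lambda>_. 0" "Phi2 V A K"] by blast
  have "oc A col c x \<le> 1 \<and> ic A col c x \<le> 1" for x c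
  proof (rule ccontr)
    assume "\<not> ?thesis"
    then have "oc A col c x \<ge> 2 \<or> ic A col c x \<ge> 2" by auto
    then show False
    proof
      assume c2: "oc A col c x \<ge> 2"
      then have "{e\<in>A. fst e = x \<and> col e = c} \<noteq> {}" unfolding oc_def by (metis card.empty not_numeral_le_zero)
      then obtain e where e: "e \<in> A" "fst e = x" "col e = c" by auto
      have cK: "c < K" using e val by auto
      have xV: "x \<in> V" using e AV by auto
      have "\<exists>\<beta><K. oc A col \<beta> x = 0"
      proof (rule ccontr)
        assume "\<not> ?thesis"
        then have "\<forall>\<beta><K. oc A col \<beta> x \<ge> 1" by auto
        from pig[OF cK c2 this] have "outd A x \<ge> Suc K" using out_sum(1)[OF finA val] by simp
        then show False using bd by (metis not_less_eq_eq)
      qed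
      then obtain \<beta> where bK: "\<beta> < K" and b0: "oc A col \<beta> x = 0" by blast
      have cb: "c \<noteq> \<beta>" using b0 c2 by auto
      have "dv (Bc A col c \<beta>) (x, True) \<ge> 2" using dvB(1)[OF cb, of A col x] b0 c2 by simp
      from improve2[OF finA val cK bK cb finV xV this] obtain col' where
        "?val col'" "Phi2 V A K col' < Phi2 V A K col" by blast
      then show False using mn by (meson not_le)
    next
      assume c2: "ic A col c x \<ge> 2"
      then have "{e\<in>A. snd e = x \<and> col e = c} \<noteq> {}" unfolding ic_def by (metis card.empty not_numeral_le_zero)
      then obtain e where e: "e \<in> A" "snd e = x" "col e = c" by auto
      have cK: "c < K" using e val by auto
      have xV: "x \<in> V" using e AV by auto
      have "\<exists>\<beta><K. ic A col \<beta> x = 0"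
      proof (rule ccontr)
        assume "\<not> ?thesis"
        then have "\<forall>\<beta><K. ic A col \<beta> x \<ge> 1" by auto
        from pig[OF cK c2 this] have "ind A x \<ge> Suc K" using out_sum(2)[OF finA val] by simp
        then show False using bd by (metis not_less_eq_eq)
      qed
      then obtain \<beta> where bK: "\<beta> < K" and b0: "ic A col \<beta> x = 0" by blast
      have cb: "\<beta> \<noteq> c" using b0 c2 by auto
      have "dv (Bc A col \<beta> c) (x, False) \<ge> 2" using dvB(2)[OF cb, of A col x] b0 c2 by simp
      from improve2[OF finA val bK cK cb finV xV this] obtain col' where
        "?val col'" "Phi2 V A K col' < Phi2 V A K col" by blast
      then show False using mn by (meson not_le)
    qed
  qed
  then show ?thesis using val by blast
qed

lemma arc_inj:
  assumes o: "orient V E A"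
  shows "inj_on (\<lambda>p. {fst p, snd p}) A"
proof (rule inj_onI)
  fix p q assume p: "p \<in> A" and q: "q \<in> A" and eq: "{fst p, snd p} = {fst q, snd q}"
  from eq have "(fst p = fst q \<and> snd p = snd q) \<or> (fst p = snd q \<and> snd p = fst q)"
    by (auto simp: doubleton_eq_iff)
  then show "p = q"
  proof
    assume "fst p = fst q \<and> snd p = snd q" then show ?thesis by (simp add: prod_eq_iff)
  next
    assume h: "fst p = snd q \<and> snd p = fst q"
    have "(fst p, snd p) \<in> A" using p by simp
    moreover have "(snd p, fst p) \<in> A" using q h by (metis prod.collapse)
    ultimately show ?thesis using orientD(6)[OF o] by blast
  qed
qed

lemma deg_bound:
  assumes sg: "simple_graph V E" and o: "orient V E A"
  shows "outd A x + ind A x \<le> max_deg V E"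
proof (cases "x \<in> V")
  case False
  have AV: "A \<subseteq> V \<times> V" using o unfolding orient_def by auto
  have e1: "{e\<in>A. fst e = x} = {}" and e2: "{e\<in>A. snd e = x} = {}" using AV False by force+
  show ?thesis unfolding outd_def ind_def by (simp only: e1 e2 card.empty)
next
  case True
  have finV: "finite V" using sg unfolding simple_graph_def by auto
  have AV: "A \<subseteq> V \<times> V" using o unfolding orient_def by auto
  have finA: "finite A" using AV finV finite_subset by blast
  have EV: "E \<subseteq> Pow V" using sg unfolding simple_graph_def by auto
  have finE: "finite E" using EV finV by (meson finite_Pow_iff finite_subset)
  have "outd A x + ind A x = card ({e\<in>A. fst e = x} \<union> {e\<in>A. snd e = x})"
    unfolding outd_def ind_def
    by (rule card_Un_disjoint[symmetric]) (use finA orientD(1)[OF o] in force)+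
  also have "\<dots> \<le> card {e\<in>E. x \<in> e}"
  proof (rule card_inj_on_le)
    show "inj_on (\<lambda>p. {fst p, snd p}) ({e\<in>A. fst e = x} \<union> {e\<in>A. snd e = x})"
      by (rule inj_on_subset[OF arc_inj[OF o]]) auto
    show "(\<lambda>p. {fst p, snd p}) ` ({e\<in>A. fst e = x} \<union> {e\<in>A. snd e = x}) \<subseteq> {e\<in>E. x \<in> e}"
      using orientD(2)[OF o] by force
    show "finite {e\<in>E. x \<in> e}" using finE by auto
  qed
  also have "\<dots> = deg E x" unfolding deg_def ..
  also have "\<dots> \<le> max_deg V E" unfolding max_deg_def using finV True by simp
  finally show ?thesis .
qed

theorem theorem3:
  fixes V :: "'a set" and E :: "'a set set"
  assumes "simple_graph V E" and "E \<noteq> {}"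
  shows "wr E \<le> sr E \<and> int (sr E) \<le> \<lceil>(real (max_deg V E) + 1) / 2\<rceil>"
proof -
  note sg = assms(1)
  have finV: "finite V" using sg unfolding simple_graph_def by auto
  obtain A where o: "orient V E A" and bal: "\<forall>x. \<bar>dv A x\<bar> \<le> 1" using balanced[OF sg] by blast
  have AV: "A \<subseteq> V \<times> V" using o unfolding orient_def by auto
  have finA: "finite A" using AV finV finite_subset by blast
  define D where "D = max_deg V E"
  define K where "K = (D + 1) div 2"
  have bd: "\<forall>x. outd A x \<le> K \<and> ind A x \<le> K"
  proof
    fix x
    have s: "outd A x + ind A x \<le> D" unfolding D_def by (rule deg_bound[OF sg o])
    have "\<bar>int (outd A x) - int (ind A x)\<bar> \<le> 1" using bal unfolding dv_def by blast
    then have "2 * outd A x \<le> D + 1" "2 * ind A x \<le> D + 1" using s by linarith+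
    then show "outd A x \<le> K \<and> ind A x \<le> K" unfolding K_def
      by (metis div_le_mono nonzero_mult_div_cancel_left zero_neq_numeral)
  qed
  have AV': "\<forall>e\<in>A. fst e \<in> V \<and> snd e \<in> V" using AV by auto
  have K0: "A \<noteq> {} \<longrightarrow> K > 0"
  proof
    assume "A \<noteq> {}"
    then obtain e where e: "e \<in> A" by blast
    have "{q\<in>A. fst q = fst e} \<noteq> {}" using e by blast
    then have "outd A (fst e) \<noteq> 0" unfolding outd_def using finA by simp
    moreover have "outd A (fst e) \<le> K" using bd by blast
    ultimately show "K > 0" by linarith
  qed
  obtain col where val: "\<forall>e\<in>A. col e < K" and one: "\<forall>x c. oc A col c x \<le> 1 \<and> ic A col c x \<le> 1"
    using good_col[OF finA finV bd AV' K0] by blast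
  define ed where "ed p = {fst p, snd p}" for p :: "'a \<times> 'a"
  define C where "C c = ed ` {e\<in>A. col e = c}" for c
  have injA: "inj_on ed A" unfolding ed_def by (rule arc_inj[OF o])
  have edA: "ed ` A = E"
  proof
    show "ed ` A \<subseteq> E" using orientD(2)[OF o] unfolding ed_def by force
    show "E \<subseteq> ed ` A"
    proof
      fix e assume "e \<in> E"
      then obtain a b where "e = {a,b}" "(a,b) \<in> A" using orient_cover[OF o] by blast
      then show "e \<in> ed ` A" unfolding ed_def by force
    qed
  qed
  have finC: "finite (C c)" for c unfolding C_def using finA by auto
  have semi: "semiregular (C c)" for c
    unfolding semiregular_def
  proof (intro exI[of _ 1] ballI)
    fix v assume "v \<in> \<Union>(C c)"
    then obtain e where e: "e \<in> C c" "v \<in> e" by blast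
    have "{e\<in>C c. v \<in> e} \<noteq> {}" using e by blast
    moreover have "finite {e\<in>C c. v \<in> e}" using finC[of c] by auto
    ultimately have "card {e\<in>C c. v \<in> e} > 0" by (simp add: card_gt_0_iff)
    then have ge: "deg (C c) v \<ge> 1" unfolding deg_def by linarith
    have sub: "{e\<in>C c. v \<in> e} \<subseteq> ed ` ({e\<in>A. fst e = v \<and> col e = c} \<union> {e\<in>A. snd e = v \<and> col e = c})"
      unfolding C_def ed_def by auto
    have "deg (C c) v \<le> card (ed ` ({e\<in>A. fst e = v \<and> col e = c} \<union> {e\<in>A. snd e = v \<and> col e = c}))"
      unfolding deg_def by (rule card_mono[OF _ sub]) (use finA in auto)
    also have "\<dots> \<le> card ({e\<in>A. fst e = v \<and> col e = c} \<union> {e\<in>A. snd e = v \<and> col e = c})"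
      by (rule card_image_le) (use finA in auto)
    also have "\<dots> \<le> oc A col c v + ic A col c v" unfolding oc_def ic_def by (rule card_Un_le)
    also have "\<dots> \<le> 2" using one[rule_format, of c v] by linarith
    finally have "deg (C c) v \<le> 2" .
    then show "deg (C c) v = 1 \<or> deg (C c) v = Suc 1" using ge by linarith
  qed
  have union: "(\<Union>c<K. C c) = E"
  proof -
    have "(\<Union>c<K. C c) = ed ` A" unfolding C_def using val by auto
    then show ?thesis using edA by simp
  qed
  have disj: "C c \<inter> C d = {}" if "c \<noteq> d" for c d
  proof (rule ccontr)
    assume "C c \<inter> C d \<noteq> {}"
    then obtain p q where "p \<in> A" "q \<in> A" "col p = c" "col q = d" "ed p = ed q" unfolding C_def by auto
    then have "p = q" using inj_onD[OF injA] by blast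
    then show False using that \<open>col p = c\<close> \<open>col q = d\<close> by simp
  qed
  define J where "J = {c\<in>{..<K}. C c \<noteq> {}}"
  define xs where "xs = sorted_list_of_set J"
  define m where "m = length xs"
  have finJ: "finite J" unfolding J_def by auto
  have setxs: "set xs = J" and dxs: "distinct xs" unfolding xs_def using finJ by auto
  have mK: "m \<le> K"
  proof -
    have "m = card J" unfolding m_def using dxs setxs distinct_card by fastforce
    also have "\<dots> \<le> card {..<K}" by (rule card_mono) (auto simp: J_def)
    finally show ?thesis by simp
  qed
  define Pt where "Pt i = C (xs ! i)" for i
  have part: "edge_partition E m Pt"
    unfolding edge_partition_def
  proof (intro conjI allI impI)
    have "(\<Union>i<m. Pt i) = (\<Union>c\<in>set xs. C c)" unfolding Pt_def m_def
      by (auto simp: set_conv_nth)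
    also have "\<dots> = (\<Union>c<K. C c)" unfolding setxs J_def by auto
    finally show "(\<Union>i<m. Pt i) = E" using union by simp
  next
    fix i assume "i < m"
    then have "xs ! i \<in> J" using setxs unfolding m_def by (metis nth_mem)
    then show "Pt i \<noteq> {}" unfolding Pt_def J_def by auto
  next
    fix i j assume "i < m" "j < m" "i \<noteq> j"
    then have "xs ! i \<noteq> xs ! j" using dxs unfolding m_def by (simp add: nth_eq_iff_index_eq)
    then show "Pt i \<inter> Pt j = {}" unfolding Pt_def by (rule disj)
  qed
  have exm: "\<exists>P. edge_partition E m P \<and> (\<forall>i<m. semiregular (P i))"
    using part semi unfolding Pt_def by blast
  have srm: "sr E \<le> m" unfolding sr_def by (rule Least_le) (rule exm)
  have exsr: "\<exists>P. edge_partition E (sr E) P \<and> (\<forall>i<sr E. semiregular (P i))"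
    unfolding sr_def by (rule LeastI_ex) (use exm in blast)
  then obtain P0 where P0: "edge_partition E (sr E) P0" "\<forall>i<sr E. semiregular (P0 i)" by blast
  have "\<forall>i<sr E. weakly_semiregular (P0 i)"
    using P0(2) unfolding semiregular_def weakly_semiregular_def by blast
  then have wrsr: "wr E \<le> sr E" unfolding wr_def using P0(1) by (intro Least_le) blast
  have "2 * K \<le> D + 1" unfolding K_def by simp
  then have "real (2 * K) \<le> real (D + 1)" by (simp only: of_nat_le_iff)
  then have "real K \<le> (real D + 1) / 2" by simp
  then have "real_of_int (int K) \<le> (real D + 1) / 2" by simp
  then have "int K \<le> \<lceil>(real D + 1) / 2\<rceil>" unfolding le_ceiling_iff by linarith
  then have "int (sr E) \<le> \<lceil>(real D + 1) / 2\<rceil>" using srm mK by linarith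
  then show ?thesis using wrsr unfolding D_def by simp
qed

end
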